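(* Let $L$, $\rho$, $\mathcal{H}$ and $\mathrm{ht}_\rho$ be as in the context. The open horoball $\{x\in\mathbb{C}H^{13}:\mathrm{ht}_\rho(x)<1\}$ is disjoint from $\mathcal{H}$, and the hyperplanes of $\mathcal{M}$ that meet its boundary $\{x:\mathrm{ht}_\rho(x)=1\}$ are exactly the orthogonal complements $l^\perp$ of the roots $l$ satisfying $|\langle\rho,l\rangle|^2=3$.
   Context: Let $\omega$ be a primitive cube root of unity, $\mathcal{E}=\mathbb{Z}[\omega]$, $\theta=\omega-\bar\omega=\sqrt{-3}$. Hermitian forms are linear in the first argument and antilinear in the second; $v^2=\langle v,v\rangle$. $\Lambda$ is the complex Leech lattice, an $\mathcal{E}$-lattice of rank 12 whose underlying real lattice is a scaled Leech lattice, scaled to have minimal norm $6$ (all inner products in $\theta\mathcal{E}$, $\Lambda=\theta\Lambda^*$). $L=\Lambda\oplus\mathcal{E}^2$, vectors $(x;y,z)$, with $\langle(x;y,z),(x';y',z')\rangle=\langle x,x'\rangle_\Lambda+\bar\theta y\bar z'+\theta z\bar y'$; signature $(13,1)$. $\mathbb{C}H^{13}$ is the set of negative-definite lines in $L\otimes_{\mathcal{E}}\mathbb{C}$. A root is a vector of $L$ of norm $3$; $\mathcal{M}$ is the set of hyperplanes $s^\perp\subseteq\mathbb{C}H^{13}$ for roots $s$, $\mathcal{H}$ their union. $\rho=(0;0,1)$, and for $x\in\mathbb{C}H^{13}$ represented by $w$, $\mathrm{ht}_\rho(x)=-|\langle\rho,w\rangle|^2/w^2$. *)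

theory Defs
  imports "HOL-Analysis.Analysis"
begin

definition omega :: complex where
  "omega = Complex (-1/2) (sqrt 3 / 2)"

definition theta :: complex where
  "theta = omega - cnj omega"             \<comment> \<open>= sqrt(-3)\<close>

definition Eis :: "complex set" where
  "Eis = {of_int a + of_int b * omega | a b. True}"

type_synonym vec12 = "complex ^ 12"

definition herm12 :: "vec12 \<Rightarrow> vec12 \<Rightarrow> complex" where
  "herm12 x y = (\<Sum>i\<in>UNIV. x $ i * cnj (y $ i))"

text \<open>The complex Leech lattice, realised (w.l.o.g., after a complex change of
 basis) inside C^12 with the standard positive definite Hermitian form:
 a free E-module of rank 12 spanning C^12, with all inner products in
 theta*E, minimal norm 6, and Lambda = theta * Lambda^*.\<close>

definition dual_lattice :: "vec12 set \<Rightarrow> vec12 set" where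
  "dual_lattice Lam = {y. \<forall>x\<in>Lam. herm12 x y \<in> Eis}"

definition complex_leech :: "vec12 set \<Rightarrow> bool" where
  "complex_leech Lam \<longleftrightarrow>
     (\<exists>b :: 12 \<Rightarrow> vec12.
        (\<forall>c :: 12 \<Rightarrow> complex. (\<Sum>i\<in>UNIV. c i *s b i) = 0 \<longrightarrow> (\<forall>i. c i = 0)) \<and>
        Lam = {(\<Sum>i\<in>UNIV. a i *s b i) | a. \<forall>i. a i \<in> Eis}) \<and>
     (\<forall>x\<in>Lam. \<forall>y\<in>Lam. herm12 x y \<in> {theta * e | e. e \<in> Eis}) \<and>
     (\<forall>x\<in>Lam. x \<noteq> 0 \<longrightarrow> Re (herm12 x x) \<ge> 6) \<and>
     (\<exists>x\<in>Lam. herm12 x x = 6) \<and>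
     Lam = {theta *s y | y. y \<in> dual_lattice Lam}"

type_synonym vecL = "vec12 \<times> complex \<times> complex"

definition formL :: "vecL \<Rightarrow> vecL \<Rightarrow> complex" where
  "formL v w = (case v of (x, y, z) \<Rightarrow> case w of (x', y', z') \<Rightarrow>
      herm12 x x' + cnj theta * y * cnj z' + theta * z * cnj y')"

definition smulL :: "complex \<Rightarrow> vecL \<Rightarrow> vecL" where
  "smulL c v = (case v of (x, y, z) \<Rightarrow> (c *s x, c * y, c * z))"

definition latL :: "vec12 set \<Rightarrow> vecL set" where
  "latL Lam = {(x, y, z) | x y z. x \<in> Lam \<and> y \<in> Eis \<and> z \<in> Eis}"

definition cline :: "vecL \<Rightarrow> vecL set" where
  "cline w = {smulL c w | c. True}"

definition CH13 :: "vecL set set" where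
  "CH13 = {cline w | w. Re (formL w w) < 0}"

definition rho :: vecL where
  "rho = (0, 0, 1)"

definition ht :: "vecL set \<Rightarrow> real" where
  "ht p = (let w = (SOME w. w \<in> p \<and> w \<noteq> (0,0,0))
           in - ((cmod (formL rho w)) ^ 2 / Re (formL w w)))"

definition is_root :: "vec12 set \<Rightarrow> vecL \<Rightarrow> bool" where
  "is_root Lam s \<longleftrightarrow> s \<in> latL Lam \<and> formL s s = 3"

definition perp :: "vecL \<Rightarrow> vecL set set" where
  "perp s = {p \<in> CH13. \<forall>w\<in>p. formL w s = 0}"

definition mirrors :: "vec12 set \<Rightarrow> vecL set set set" where
  "mirrors Lam = {perp s | s. is_root Lam s}"

end

theory Submission imports Defs begin
lemma theta_eq: "theta = Complex 0 (sqrt 3)"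
  unfolding theta_def omega_def by (simp add: complex_eq_iff)
lemma cmod_theta2: "(cmod theta)^2 = 3"
  by (simp add: theta_eq cmod_def)
lemma herm12_cnj: "herm12 a x = cnj (herm12 x a)"
  unfolding herm12_def by (simp add: mult.commute)
lemma herm12_self: "herm12 x x = of_real (\<Sum>i\<in>UNIV. (cmod (x$i))^2)"
  unfolding herm12_def of_real_sum by (rule sum.cong) (simp_all only: complex_norm_square)
lemma herm12_self_Re: "Re (herm12 x x) \<ge> 0"
  by (simp add: herm12_self sum_nonneg)
lemma herm12_expand: "herm12 (b *s x - y *s a) (b *s x - y *s a) = b*cnj b*herm12 x x - b*cnj y*herm12 x a - y*cnj b*herm12 a x + y*cnj y*herm12 a a"
  unfolding herm12_def
  by (simp add: sum_distrib_left sum_subtractf[symmetric] sum.distrib[symmetric] algebra_simps)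
lemma smul_left: "formL (smulL c v) w = c * formL v w"
  by (cases v; cases w) (simp add: formL_def smulL_def herm12_def sum_distrib_left algebra_simps)
lemma smul_right: "formL v (smulL c w) = cnj c * formL v w"
  by (cases v; cases w) (simp add: formL_def smulL_def herm12_def sum_distrib_left algebra_simps)
lemma formL_rho: "formL rho (x,y,z) = theta * cnj y"
  by (simp add: formL_def rho_def herm12_def)
lemma cmod_rho: "(cmod (formL rho (x,y,z)))^2 = 3 * (cmod y)^2"
  by (simp add: formL_rho norm_mult power_mult_distrib cmod_theta2)

lemma ht_cline:
  assumes "Re (formL w w) < 0"
  shows "ht (cline w) = - ((cmod (formL rho w))^2 / Re (formL w w))"
proof -
  have w0: "w \<noteq> (0,0,0)" using assms by (auto simp: formL_def herm12_def)
  have ex: "\<exists>v. v \<in> cline w \<and> v \<noteq> (0,0,0)"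
    by (rule exI[of _ w]) (use w0 in \<open>auto simp: cline_def intro!: exI[of _ 1] simp: smulL_def split: prod.splits\<close>)
  define v where "v = (SOME v. v \<in> cline w \<and> v \<noteq> (0,0,0))"
  have v: "v \<in> cline w" "v \<noteq> (0,0,0)" using someI_ex[OF ex] unfolding v_def by auto
  then obtain c where c: "v = smulL c w" by (auto simp: cline_def)
  have "c \<noteq> 0" using v(2) c by (auto simp: smulL_def split: prod.splits)
  hence cc: "(cmod c)^2 > 0" by simp
  have r: "(cmod (formL rho v))^2 = (cmod c)^2 * (cmod (formL rho w))^2"
    by (simp add: c smul_right norm_mult power_mult_distrib)
  have "formL v v = c * cnj c * formL w w" by (simp add: c smul_left smul_right)
  hence n: "Re (formL v v) = (cmod c)^2 * Re (formL w w)"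
    by (simp add: complex_norm_square[symmetric])
  have "ht (cline w) = - ((cmod (formL rho v))^2 / Re (formL v v))"
    unfolding ht_def v_def Let_def by simp
  also have "\<dots> = - ((cmod (formL rho w))^2 / Re (formL w w))"
    using cc by (simp add: r n)
  finally show ?thesis .
qed

lemma eis_norm:
  assumes "b \<in> Eis" "b \<noteq> 0" shows "(cmod b)^2 \<ge> 1"
proof -
  obtain m n :: int where b: "b = of_int m + of_int n * omega" using assms(1) by (auto simp: Eis_def)
  have "(cmod b)^2 = (m - n/2)^2 + (n * sqrt 3 / 2)^2"
    by (simp add: b omega_def cmod_power2)
  also have "\<dots> = of_int (m^2 - m*n + n^2)"
    by (simp add: power2_eq_square algebra_simps)
  finally have e: "(cmod b)^2 = of_int (m^2 - m*n + n^2)" .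
  have "(m,n) \<noteq> (0,0)" using assms(2) b by auto
  hence "4*(m^2 - m*n + n^2) > 0"
  proof -
    have "4*(m^2 - m*n + n^2) = (2*m-n)^2 + 3*n^2" by (simp add: power2_eq_square algebra_simps)
    moreover have "(2*m-n)^2 + 3*n^2 > 0" using \<open>(m,n) \<noteq> (0,0)\<close>
      by (cases "n = 0") (auto simp: add_nonneg_pos)
    ultimately show ?thesis by simp
  qed
  hence "m^2 - m*n + n^2 \<ge> 1" by simp
  thus ?thesis unfolding e by (metis of_int_1 of_int_le_iff)
qed

lemma root_b:
  assumes "complex_leech Lam" "is_root Lam (a,b,c)"
  shows "b \<in> Eis" "b \<noteq> 0"
proof -
  show "b \<in> Eis" using assms(2) by (auto simp: is_root_def latL_def)
  show "b \<noteq> 0"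
  proof
    assume b0: "b = 0"
    have aL: "a \<in> Lam" using assms(2) by (auto simp: is_root_def latL_def)
    have h: "herm12 a a = 3" using assms(2) b0 by (simp add: is_root_def formL_def)
    show False
    proof (cases "a = 0")
      case True thus False using h by (simp add: herm12_def)
    next
      case False
      hence "Re (herm12 a a) \<ge> 6" using assms(1) aL by (auto simp: complex_leech_def)
      thus False using h by simp
    qed
  qed
qed

lemma key:
  assumes s3: "formL (a,b,c) (a,b,c) = 3" and o: "formL (x,y,z) (a,b,c) = 0"
  shows "(cmod b)^2 * Re (formL (x,y,z) (x,y,z)) + 3 * (cmod y)^2 \<ge> 0"
proof -
  define W where "W = formL (x,y,z) (x,y,z)"
  have h1: "herm12 a a = 3 - cnj theta * b * cnj c - theta * c * cnj b"
    using s3 by (simp add: formL_def algebra_simps)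
  have h2: "herm12 x a = - (cnj theta * y * cnj c + theta * z * cnj b)"
    using o unfolding eq_neg_iff_add_eq_0 by (simp add: formL_def add_ac mult_ac)
  have h3: "herm12 a x = - (theta * cnj y * c + cnj theta * cnj z * b)"
    by (subst herm12_cnj) (simp add: h2 mult.commute mult.left_commute)
  have h4: "herm12 x x = W - cnj theta * y * cnj z - theta * z * cnj y"
    by (simp add: W_def formL_def)
  have "herm12 (b *s x - y *s a) (b *s x - y *s a) = b * cnj b * W + 3 * (y * cnj y)"
    unfolding herm12_expand h1 h2 h3 h4 by (simp add: algebra_simps)
  hence "Re (b * cnj b * W + 3 * (y * cnj y)) \<ge> 0" by (metis herm12_self_Re)
  moreover have "b * cnj b = of_real ((cmod b)^2)" "y * cnj y = of_real ((cmod y)^2)"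
    by (simp_all only: complex_norm_square)
  ultimately show ?thesis unfolding W_def by simp
qed


lemma in_perp_cline:
  "cline w \<in> perp s \<longleftrightarrow> cline w \<in> CH13 \<and> formL w s = 0"
proof -
  have "w \<in> cline w" unfolding cline_def
    by (rule CollectI, rule exI[of _ 1]) (cases w, simp add: smulL_def)
  moreover have "formL w s = 0 \<Longrightarrow> v \<in> cline w \<Longrightarrow> formL v s = 0" for v
    by (auto simp: cline_def smul_left)
  ultimately show ?thesis unfolding perp_def by blast
qed

lemma lower:
  assumes L: "complex_leech Lam" and r: "is_root Lam s" and n: "Re (formL w w) < 0"
    and o: "formL w s = 0"
  shows "ht (cline w) \<ge> (cmod (formL rho s))^2 / 3" "(cmod (formL rho s))^2 / 3 \<ge> 1"
proof -
  obtain a b c where s: "s = (a,b,c)" by (cases s)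
  obtain x y z where w: "w = (x,y,z)" by (cases w)
  have bE: "b \<in> Eis" "b \<noteq> 0" using root_b[OF L] r s by auto
  have s3: "formL (a,b,c) (a,b,c) = 3" using r s by (simp add: is_root_def)
  have k: "(cmod b)^2 * Re (formL w w) + 3 * (cmod y)^2 \<ge> 0"
    using key[OF s3] o s w by simp
  have ht: "ht (cline w) = 3 * (cmod y)^2 / (- Re (formL w w))"
    using ht_cline[OF n] w by (simp add: cmod_rho)
  have "(cmod b)^2 \<le> 3 * (cmod y)^2 / (- Re (formL w w))"
  proof -
    have pos: "- Re (formL w w) > 0" using n by simp
    have "(cmod b)^2 * (- Re (formL w w)) \<le> 3 * (cmod y)^2" using k by (simp add: algebra_simps)
    thus ?thesis by (subst pos_le_divide_eq[OF pos])
  qed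
  thus "ht (cline w) \<ge> (cmod (formL rho s))^2 / 3" by (simp add: ht s cmod_rho)
  show "(cmod (formL rho s))^2 / 3 \<ge> 1" using eis_norm[OF bE] by (simp add: s cmod_rho)
qed

theorem lemma4p1:
  fixes Lam :: "vec12 set"
  assumes "complex_leech Lam"
  shows "{p \<in> CH13. ht p < 1} \<inter> \<Union>(mirrors Lam) = {} \<and>
         {H \<in> mirrors Lam. H \<inter> {p \<in> CH13. ht p = 1} \<noteq> {}}
           = {perp l | l. is_root Lam l \<and> (cmod (formL rho l))^2 = 3}"
proof (intro conjI)
  show "{p \<in> CH13. ht p < 1} \<inter> \<Union>(mirrors Lam) = {}"
  proof (rule ccontr)
    assume "\<not> ?thesis"
    then obtain p s where p: "p \<in> CH13" "ht p < 1" "p \<in> perp s" "is_root Lam s"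
      by (auto simp: mirrors_def)
    then obtain w where w: "p = cline w" "Re (formL w w) < 0" by (auto simp: CH13_def)
    have "formL w s = 0" using p(3) w(1) in_perp_cline by blast
    from lower[OF assms p(4) w(2) this] p(2) show False unfolding w(1) by linarith
  qed
  show "{H \<in> mirrors Lam. H \<inter> {p \<in> CH13. ht p = 1} \<noteq> {}}
           = {perp l | l. is_root Lam l \<and> (cmod (formL rho l))^2 = 3}"
  proof (intro set_eqI iffI)
    fix H assume "H \<in> {H \<in> mirrors Lam. H \<inter> {p \<in> CH13. ht p = 1} \<noteq> {}}"
    then obtain s p where H: "H = perp s" "is_root Lam s" "p \<in> perp s" "p \<in> CH13" "ht p = 1"
      by (auto simp: mirrors_def)
    then obtain w where w: "p = cline w" "Re (formL w w) < 0" by (auto simp: CH13_def)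
    have "formL w s = 0" using H(3) w(1) in_perp_cline by blast
    from lower[OF assms H(2) w(2) this] H(5)
    have "(cmod (formL rho s))^2 = 3" unfolding w(1) by linarith
    thus "H \<in> {perp l | l. is_root Lam l \<and> (cmod (formL rho l))^2 = 3}" using H by blast
  next
    fix H assume "H \<in> {perp l | l. is_root Lam l \<and> (cmod (formL rho l))^2 = 3}"
    then obtain l where H: "H = perp l" "is_root Lam l" "(cmod (formL rho l))^2 = 3" by blast
    obtain a b c where l: "l = (a,b,c)" by (cases l)
    have b1: "(cmod b)^2 = 1" using H(3) l by (simp add: cmod_rho)
    hence "b \<noteq> 0" by auto
    moreover have "theta \<noteq> 0" by (simp add: theta_eq complex_eq_iff)
    ultimately have nz: "theta * cnj b \<noteq> 0" by simp
    define t where "t = -3 / (theta * cnj b)"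
    have tt: "theta * t * cnj b = -3" using nz by (simp add: t_def field_simps)
    have s3: "formL (a,b,c) (a,b,c) = 3" using H(2) l by (simp add: is_root_def)
    define w where "w = (a, b, c + t)"
    have o: "formL w l = 0"
    proof -
      have "formL w l = formL (a,b,c) (a,b,c) + theta * t * cnj b"
        by (simp add: w_def l formL_def algebra_simps)
      thus ?thesis using s3 tt by simp
    qed
    have nw: "formL w w = -3"
    proof -
      have "formL w w = formL (a,b,c) (a,b,c) + cnj (theta * t * cnj b) + theta * t * cnj b"
        by (simp add: w_def formL_def algebra_simps)
      thus ?thesis using s3 tt by simp
    qed
    have CH: "cline w \<in> CH13" unfolding CH13_def using nw by (intro CollectI exI[of _ w]) simp
    have "ht (cline w) = 1"
      using ht_cline[of w] nw b1 by (simp add: w_def cmod_rho)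
    moreover have "cline w \<in> perp l" using in_perp_cline CH o by blast
    moreover have "perp l \<in> mirrors Lam" unfolding mirrors_def using H(2) by blast
    ultimately show "H \<in> {H \<in> mirrors Lam. H \<inter> {p \<in> CH13. ht p = 1} \<noteq> {}}"
      using H(1) CH by blast
  qed
qed

end
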